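(* If $s>0$ is small enough, there exist numbers $S_n,T_n$ and a point $z_0$ such that $R_n(1)=z_0$, $R_n(z_0)=1$ and $R_n'(1)R_n'(z_0)=1$ (so $\{1,z_0\}$ is a parabolic periodic orbit of period $2$ with multiplier $1$), and these can be chosen so that $\lim_{s\to0^+}S_n/s^\nu=\mu$, $\lim_{s\to0^+}T_n/s^\nu=(d_1d_n-1)\mu$ and $\lim_{s\to0^+}z_0/s^\nu=d_1d_n\mu$.
   Context: $n\ge3$ odd, $d_1,\dots,d_n$ positive integers with $\sum1/d_i<1$, $d_{\max}=\max_id_i$, $D_i=d_i+d_{i+1}$, $c_1=(d_{\max}^2s)^{1/d_1}$, $c_i=s^{1/d_i}c_{i-1}$ ($2\le i\le n-1$), $R_n(z)=\frac{S_n}{z^{d_n}}\prod_{i=1}^{n-1}(z^{D_i}-c_i^{D_i})^{(-1)^i}+T_n$, $\nu=\frac{d_n}{d_n-1}\sum_{i=1}^{n-1}\frac1{d_i}$, and $\mu=(d_1d_n)^{-d_n/(d_n-1)}d_{\max}^{2(d_n-d_1)/(d_1(d_n-1))}$. *)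

theory Defs
  imports "HOL-Analysis.Analysis"
begin

definition dmax :: "(nat \<Rightarrow> nat) \<Rightarrow> nat \<Rightarrow> nat" where
  "dmax d n = Max (d ` {1..n})"

text \<open>c_1 = (M^2 s)^(1/d_1), c_i = s^(1/d_i) c_(i-1); here M stands for d_max.
  The value at index 0 is unused.\<close>
fun cseq :: "(nat \<Rightarrow> nat) \<Rightarrow> nat \<Rightarrow> real \<Rightarrow> nat \<Rightarrow> real" where
  "cseq d M s 0 = 1"
| "cseq d M s (Suc 0) = (real M ^ 2 * s) powr (1 / real (d 1))"
| "cseq d M s (Suc (Suc k)) = s powr (1 / real (d (Suc (Suc k)))) * cseq d M s (Suc k)"

definition DD :: "(nat \<Rightarrow> nat) \<Rightarrow> nat \<Rightarrow> nat" where
  "DD d i = d i + d (Suc i)"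

definition Rn :: "(nat \<Rightarrow> nat) \<Rightarrow> nat \<Rightarrow> real \<Rightarrow> complex \<Rightarrow> complex \<Rightarrow> complex \<Rightarrow> complex" where
  "Rn d n s S T z =
     S / z ^ d n *
     (\<Prod>i\<in>{1..n-1}.
        (if even i then (z ^ DD d i - complex_of_real (cseq d (dmax d n) s i) ^ DD d i)
         else inverse (z ^ DD d i - complex_of_real (cseq d (dmax d n) s i) ^ DD d i)))
     + T"

definition nu_exp :: "(nat \<Rightarrow> nat) \<Rightarrow> nat \<Rightarrow> real" where
  "nu_exp d n = real (d n) / (real (d n) - 1) * (\<Sum>i=1..n-1. 1 / real (d i))"

definition mu_const :: "(nat \<Rightarrow> nat) \<Rightarrow> nat \<Rightarrow> real" where
  "mu_const d n = (real (d 1) * real (d n)) powr (- real (d n) / (real (d n) - 1))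
     * real (dmax d n) powr (2 * (real (d n) - real (d 1)) / (real (d 1) * (real (d n) - 1)))"

end

theory Submission
  imports Defs
begin


lemma telescope:
  fixes A :: "nat \<Rightarrow> real"
  shows "(\<Sum>i\<in>{1..2*k}. (-1)^i * (A i + A (Suc i))) = A (2*k+1) - A 1"
proof (induction k)
  case 0 then show ?case by simp
next
  case (Suc k)
  have e: "{1..2*Suc k} = insert (2*k+2) (insert (2*k+1) {1..2*k})" by auto
  have "(\<Sum>i\<in>{1..2*Suc k}. (-1)^i * (A i + A (Suc i))) =
     (-1)^(2*k+2) * (A (2*k+2) + A (Suc (2*k+2))) + (-1)^(2*k+1) * (A (2*k+1) + A (Suc (2*k+1)))
      + (\<Sum>i\<in>{1..2*k}. (-1)^i * (A i + A (Suc i)))"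
    unfolding e by (simp add: algebra_simps)
  also have "\<dots> = A (Suc (2*k+2)) - A 1"
  proof -
    have h1: "(-1::real)^(2*k+2) = 1" by (simp add: power_add)
    have h2: "(-1::real)^(2*k+1) = -1" by (simp add: power_add)
    show ?thesis unfolding h1 h2 using Suc by simp
  qed
  finally show ?case by (simp add: eval_nat_numeral)
qed

lemma alt_sum_zero: "(\<Sum>i\<in>{1..2*k}. (-1::real)^i) = 0"
proof (induction k)
  case 0 then show ?case by simp
next
  case (Suc k)
  have e: "{1..2*Suc k} = insert (2*k+2) (insert (2*k+1) {1..2*k})" by auto
  show ?case unfolding e using Suc by simp
qed

lemma spowr0: "(p::real) > 0 \<Longrightarrow> ((\<lambda>s. s powr p) \<longlongrightarrow> 0) (at_right 0)"
  by (rule tendsto_zero_powrI[OF tendsto_ident_at tendsto_const]) (auto simp: eventually_at_filter)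

lemma ev_pos: "\<forall>\<^sub>F s in at_right (0::real). s > 0" by (simp add: eventually_at_filter)

lemma if_lim:
  fixes q :: "real \<Rightarrow> real"
  assumes q: "(q \<longlongrightarrow> 0) F" and D: "D \<ge> 1"
  shows "((\<lambda>s. if even i then q s ^ D - 1 else inverse (q s ^ D - 1)) \<longlongrightarrow> -1) F"
proof -
  have z: "(0::real) ^ D = 0" using D by (cases D) auto
  have l: "((\<lambda>s. q s ^ D - 1) \<longlongrightarrow> -1) F"
    using tendsto_diff[OF tendsto_power[OF q, of D] tendsto_const[of 1]] z by simp
  have li: "((\<lambda>s. inverse (q s ^ D - 1)) \<longlongrightarrow> -1) F"
    using tendsto_inverse[OF l] by simp
  show ?thesis using l li by (cases "even i") simp_all
qed

lemma if_lim1: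
  fixes q :: "real \<Rightarrow> real"
  assumes q: "(q \<longlongrightarrow> 0) F" and D: "D \<ge> 1"
  shows "((\<lambda>s. if even i then 1 - q s ^ D else inverse (1 - q s ^ D)) \<longlongrightarrow> 1) F"
proof -
  have z: "(0::real) ^ D = 0" using D by (cases D) auto
  have l: "((\<lambda>s. 1 - q s ^ D) \<longlongrightarrow> 1) F"
    using tendsto_diff[OF tendsto_const[of 1] tendsto_power[OF q, of D]] z by simp
  have li: "((\<lambda>s. inverse (1 - q s ^ D)) \<longlongrightarrow> 1) F"
    using tendsto_inverse[OF l] by simp
  show ?thesis using l li by (cases "even i") simp_all
qed

lemma aux_prod:
  fixes D N A B :: real
  assumes D: "D \<noteq> 0" and h: "N^2 * A * B = D^2"
  shows "(N / D) * A * ((N / D) * B) = 1"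
proof -
  have "(N / D) * A * ((N / D) * B) = (N^2 * A * B) / D^2" using D by (simp add: field_simps power2_eq_square)
  also have "\<dots> = 1" using h D by simp
  finally show ?thesis .
qed

locale L =
  fixes d :: "nat \<Rightarrow> nat" and n :: nat
  assumes n3: "n \<ge> 3" and nodd: "odd n" and dpos: "\<forall>i\<in>{1..n}. d i > 0"
    and sum1: "(\<Sum>i=1..n. 1 / real (d i)) < 1"
begin

definition "M = real (dmax d n)"
definition "m = M powr (2 / real (d 1))"
definition "sig i = (\<Sum>j=1..i. 1 / real (d j))"
definition "I = {1..n-1}"
definition "c s i = cseq d (dmax d n) s i"
definition "DDr i = real (DD d i)"

lemma d_ge2: "i \<in> {1..n} \<Longrightarrow> d i \<ge> 2"
proof -
  assume i: "i \<in> {1..n}"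
  have "1 / real (d i) \<le> (\<Sum>i=1..n. 1 / real (d i))"
    by (rule member_le_sum) (use i in auto)
  with sum1 have "1 / real (d i) < 1" by linarith
  moreover have "d i > 0" using dpos i by auto
  ultimately show ?thesis by (auto simp: field_simps)
qed

lemma M_ge: "M \<ge> real (d 1)"
  unfolding M_def dmax_def using n3 by (simp add: Max_ge_iff)

lemma M_pos: "M > 0" using M_ge d_ge2[of 1] n3 by auto
lemma m_pos: "m > 0" using M_pos by (simp add: m_def)

lemma cseq_eq: "s > 0 \<Longrightarrow> c s (Suc k) = m * s powr sig (Suc k)"
proof (induction k)
  case 0
  have "c s (Suc 0) = (M^2 * s) powr (1 / real (d 1))" by (simp add: c_def M_def)
  also have "\<dots> = (M^2) powr (1 / real (d 1)) * s powr (1 / real (d 1))"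
    using 0 by (simp add: powr_mult)
  also have "(M^2) powr (1 / real (d 1)) = m"
  proof -
    have "M^2 = M powr 2" using M_pos by (simp add: powr_numeral)
    then have "(M^2) powr (1 / real (d 1)) = M powr (2 * (1 / real (d 1)))" by (simp only: powr_powr)
    then show ?thesis by (simp add: m_def)
  qed
  finally show ?case by (simp add: sig_def)
next
  case (Suc k)
  have "c s (Suc (Suc k)) = s powr (1 / real (d (Suc (Suc k)))) * c s (Suc k)"
    by (simp add: c_def)
  also have "\<dots> = m * s powr sig (Suc (Suc k))"
    using Suc by (simp add: sig_def powr_add sum.cl_ivl_Suc)
  finally show ?case .
qed

lemma n_eq: "n = 2 * (n div 2) + 1" using nodd by presburger
lemma I_eq: "I = {1..2 * (n div 2)}" unfolding I_def using n_eq by (metis add_diff_cancel_right')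
lemma finI: "finite I" by (simp add: I_def)
lemma I_sub: "i \<in> I \<Longrightarrow> i \<in> {1..n} \<and> Suc i \<in> {1..n}" by (auto simp: I_def)

lemma dpos': "i \<in> {1..n} \<Longrightarrow> real (d i) > 0" using dpos by auto

lemma sig_pos: "1 \<le> i \<Longrightarrow> i \<le> n \<Longrightarrow> sig i > 0"
  unfolding sig_def by (rule sum_pos) (use dpos' in auto)

lemma sig_mono: "i \<le> j \<Longrightarrow> j \<le> n \<Longrightarrow> sig i \<le> sig j"
  unfolding sig_def by (rule sum_mono2) (use dpos' in auto)

lemma sig_Suc: "sig (Suc i) = sig i + 1 / real (d (Suc i))"
  by (simp add: sig_def sum.cl_ivl_Suc)

definition "nu = nu_exp d n"
definition "dn = real (d n)"

lemma dn_ge: "dn \<ge> 2" using d_ge2[of n] n3 by (simp add: dn_def)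

lemma nu_eq: "nu = dn / (dn - 1) * sig (n - 1)" by (simp add: nu_def nu_exp_def dn_def sig_def)

lemma sig_n1_pos: "sig (n-1) > 0" using n3 by (intro sig_pos) auto

lemma nu_mult: "nu * (dn - 1) = dn * sig (n-1)" using dn_ge by (simp add: nu_eq)

lemma nu_gt: "i \<in> I \<Longrightarrow> sig i < nu"
proof -
  assume i: "i \<in> I"
  have "sig i \<le> sig (n-1)" using i by (intro sig_mono) (auto simp: I_def)
  also have "sig (n-1) < nu"
  proof -
    have "nu - sig (n-1) = sig (n-1) / (dn - 1)" using dn_ge by (simp add: nu_eq field_simps)
    also have "\<dots> > 0" using dn_ge sig_n1_pos by simp
    finally show ?thesis by simp
  qed
  finally show ?thesis .
qed

lemma nu_pos: "nu > 0"
proof -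
  have "1 \<in> I" using n3 by (auto simp: I_def)
  then show ?thesis using nu_gt[of 1] sig_pos[of 1] n3 by linarith
qed

lemma T1: "(\<Sum>i\<in>I. (-1)^i * DDr i) = real (d n) - real (d 1)"
proof -
  have "(\<Sum>i\<in>I. (-1)^i * DDr i) = (\<Sum>i\<in>{1..2*(n div 2)}. (-1)^i * (real (d i) + real (d (Suc i))))"
    by (simp add: I_eq DDr_def DD_def)
  also have "\<dots> = real (d (2*(n div 2)+1)) - real (d 1)" by (rule telescope)
  finally show ?thesis using n_eq by simp
qed

lemma T2: "(\<Sum>i\<in>I. (-1)^i * DDr i * sig i) = dn * sig (n-1)"
proof -
  let ?A = "\<lambda>i. real (d i) * sig i"
  have "(\<Sum>i\<in>I. (-1)^i * DDr i * sig i) = (\<Sum>i\<in>I. (-1)^i * (?A i + ?A (Suc i)) - (-1)^i)"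
  proof (rule sum.cong[OF refl])
    fix i assume i: "i \<in> I"
    have "real (d (Suc i)) > 0" using I_sub[OF i] dpos' by auto
    then show "(-1)^i * DDr i * sig i = (-1)^i * (?A i + ?A (Suc i)) - (-1)^i"
      by (simp add: DDr_def DD_def sig_Suc field_simps)
  qed
  also have "\<dots> = (\<Sum>i\<in>{1..2*(n div 2)}. (-1)^i * (?A i + ?A (Suc i))) - (\<Sum>i\<in>{1..2*(n div 2)}. (-1::real)^i)"
    by (simp add: I_eq sum_subtractf)
  also have "\<dots> = ?A n - ?A 1" using telescope[of ?A "n div 2"] alt_sum_zero n_eq by simp
  also have "\<dots> = dn * sig (n-1)"
  proof -
    have "sig n = sig (n-1) + 1 / dn" using sig_Suc[of "n-1"] n3 by (simp add: dn_def)
    moreover have "sig 1 = 1 / real (d 1)" by (simp add: sig_def)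
    ultimately show ?thesis using dn_ge dpos'[of 1] n3 by (simp add: dn_def field_simps)
  qed
  finally show ?thesis .
qed


lemma c_eq: "s > 0 \<Longrightarrow> i \<in> I \<Longrightarrow> c s i = m * s powr sig i"
proof -
  assume s: "s > 0" and i: "i \<in> I"
  then obtain k where "i = Suc k" by (cases i) (auto simp: I_def)
  then show ?thesis using cseq_eq[OF s] by simp
qed

lemma c_pos: "s > 0 \<Longrightarrow> i \<in> I \<Longrightarrow> c s i > 0"
  using c_eq m_pos by simp

lemma DD_pos: "i \<in> I \<Longrightarrow> DD d i \<ge> 1"
proof -
  assume "i \<in> I"
  then have "d i \<ge> 2" using d_ge2 I_sub by blast
  then show ?thesis by (simp add: DD_def)
qed

lemma DD_ne0: "i \<in> I \<Longrightarrow> DD d i \<noteq> 0" using DD_pos[of i] by linarith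

definition "K s = (\<Prod>i\<in>I. if even i then c s i ^ DD d i else inverse (c s i ^ DD d i))"
definition "kap = m powr (dn - real (d 1))"

lemma K_eq: "s > 0 \<Longrightarrow> K s = kap * s powr (nu * (dn - 1))"
proof -
  assume s: "s > 0"
  have fac: "(if even i then c s i ^ DD d i else inverse (c s i ^ DD d i))
      = m powr ((-1)^i * DDr i) * s powr ((-1)^i * DDr i * sig i)" if i: "i \<in> I" for i
  proof -
    have "c s i ^ DD d i = m powr DDr i * s powr (DDr i * sig i)"
    proof -
      have "c s i ^ DD d i = (m * s powr sig i) powr DDr i"
        using c_eq[OF s i] c_pos[OF s i] by (simp add: DDr_def powr_realpow)
      also have "\<dots> = m powr DDr i * s powr (DDr i * sig i)"
        using m_pos s by (simp add: powr_mult powr_powr mult.commute)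
      finally show ?thesis .
    qed
    then show ?thesis by (cases "even i") (simp_all add: powr_minus)
  qed
  have "K s = (\<Prod>i\<in>I. m powr ((-1)^i * DDr i)) * (\<Prod>i\<in>I. s powr ((-1)^i * DDr i * sig i))"
    unfolding K_def by (simp add: fac prod.distrib cong: prod.cong)
  also have "\<dots> = m powr (\<Sum>i\<in>I. (-1)^i * DDr i) * s powr (\<Sum>i\<in>I. (-1)^i * DDr i * sig i)"
    using m_pos s by (simp add: powr_sum)
  also have "\<dots> = kap * s powr (nu * (dn - 1))"
    unfolding nu_mult by (simp add: T1 T2 kap_def dn_def)
  finally show ?thesis .
qed


definition "P s z = (\<Prod>i\<in>I. if even i then z ^ DD d i - c s i ^ DD d i else inverse (z ^ DD d i - c s i ^ DD d i))"
definition "fr s z = P s z / z ^ d n"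
definition "Ld s z = - dn / z + (\<Sum>i\<in>I. (-1)^i * DDr i * z ^ (DD d i - 1) / (z ^ DD d i - c s i ^ DD d i))"
definition "Q s z = (\<Prod>i\<in>I. if even i then (z / c s i) ^ DD d i - 1 else inverse ((z / c s i) ^ DD d i - 1))"

lemma P_fac: "s > 0 \<Longrightarrow> P s z = K s * Q s z"
proof -
  assume s: "s > 0"
  have "P s z = (\<Prod>i\<in>I. (if even i then c s i ^ DD d i else inverse (c s i ^ DD d i)) *
      (if even i then (z / c s i) ^ DD d i - 1 else inverse ((z / c s i) ^ DD d i - 1)))"
    unfolding P_def
  proof (rule prod.cong[OF refl])
    fix i assume i: "i \<in> I"
    have e: "z ^ DD d i - c s i ^ DD d i = c s i ^ DD d i * ((z / c s i) ^ DD d i - 1)"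
      using c_pos[OF s i] by (simp add: power_divide field_simps)
    show "(if even i then z ^ DD d i - c s i ^ DD d i else inverse (z ^ DD d i - c s i ^ DD d i)) =
      (if even i then c s i ^ DD d i else inverse (c s i ^ DD d i)) *
      (if even i then (z / c s i) ^ DD d i - 1 else inverse ((z / c s i) ^ DD d i - 1))"
      unfolding e by (simp add: inverse_mult_distrib)
  qed
  also have "\<dots> = K s * Q s z" by (simp add: K_def Q_def prod.distrib)
  finally show ?thesis .
qed

lemma card_I_even: "even (card I)" using n_eq by (simp add: I_def) presburger

lemma q_lim:
  assumes x: "(x \<longlongrightarrow> x0) (at_right 0)" and i: "i \<in> I"
  shows "((\<lambda>s. x s * s powr nu / c s i) \<longlongrightarrow> 0) (at_right 0)"
proof -
  have "\<forall>\<^sub>F s in at_right 0. x s / m * s powr (nu - sig i) = x s * s powr nu / c s i"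
    using ev_pos by eventually_elim (use m_pos in \<open>simp add: c_eq[OF _ i] powr_diff field_simps\<close>)
  moreover have "((\<lambda>s. x s / m * s powr (nu - sig i)) \<longlongrightarrow> x0 / m * 0) (at_right 0)"
    by (intro tendsto_intros x spowr0) (use nu_gt[OF i] m_pos in auto)
  ultimately show ?thesis by (simp add: tendsto_cong)
qed

lemma Q_lim:
  assumes x: "(x \<longlongrightarrow> x0) (at_right 0)"
  shows "((\<lambda>s. Q s (x s * s powr nu)) \<longlongrightarrow> 1) (at_right 0)"
proof -
  have "((\<lambda>s. Q s (x s * s powr nu)) \<longlongrightarrow> (\<Prod>i\<in>I. -1)) (at_right 0)"
    unfolding Q_def by (intro tendsto_prod if_lim q_lim[OF x] DD_pos; assumption)
  moreover have "(\<Prod>i\<in>I. -1::real) = 1" using card_I_even by simp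
  ultimately show ?thesis by simp
qed

lemma c_lim: "i \<in> I \<Longrightarrow> ((\<lambda>s. c s i) \<longlongrightarrow> 0) (at_right 0)"
proof -
  assume i: "i \<in> I"
  have "\<forall>\<^sub>F s in at_right 0. m * s powr sig i = c s i"
    using ev_pos by eventually_elim (simp add: c_eq[OF _ i])
  moreover have "((\<lambda>s. m * s powr sig i) \<longlongrightarrow> m * 0) (at_right 0)"
    by (intro tendsto_intros spowr0) (use i sig_pos in \<open>auto simp: I_def\<close>)
  ultimately show ?thesis by (simp add: tendsto_cong)
qed

lemma f1_lim: "((\<lambda>s. fr s 1) \<longlongrightarrow> 1) (at_right 0)"
proof -
  have "((\<lambda>s. fr s 1) \<longlongrightarrow> (\<Prod>i\<in>I. 1)) (at_right 0)"
  proof -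
    have e: "fr s 1 = (\<Prod>i\<in>I. if even i then 1 - c s i ^ DD d i else inverse (1 - c s i ^ DD d i))" for s
      by (simp add: fr_def P_def cong: if_cong)
    have "((\<lambda>s. \<Prod>i\<in>I. if even i then 1 - c s i ^ DD d i else inverse (1 - c s i ^ DD d i)) \<longlongrightarrow> (\<Prod>i\<in>I. 1)) (at_right 0)"
      by (rule tendsto_prod, rule if_lim1, erule c_lim, erule DD_pos)
    then show ?thesis unfolding e .
  qed
  then show ?thesis by simp
qed

lemma L1_lim: "((\<lambda>s. Ld s 1) \<longlongrightarrow> - real (d 1)) (at_right 0)"
proof -
  have "((\<lambda>s. Ld s 1) \<longlongrightarrow> - dn + (\<Sum>i\<in>I. (-1)^i * DDr i * 1 / (1 - 0 ^ DD d i))) (at_right 0)"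
    unfolding Ld_def by (simp only: power_one, intro tendsto_intros c_lim) (auto simp: power_0_left DD_ne0)
  moreover have "- dn + (\<Sum>i\<in>I. (-1)^i * DDr i * 1 / (1 - 0 ^ DD d i)) = - real (d 1)"
    by (simp add: T1 dn_def power_0_left DD_ne0 cong: sum.cong)
  ultimately show ?thesis by simp
qed


lemma zf_lim:
  assumes x: "(x \<longlongrightarrow> x0) (at_right 0)" and x0: "x0 > 0"
  shows "((\<lambda>s. (x s * s powr nu) * fr s (x s * s powr nu)) \<longlongrightarrow> kap / x0 ^ (d n - 1)) (at_right 0)"
proof -
  have xpos: "\<forall>\<^sub>F s in at_right 0. x s > 0" using order_tendstoD(1)[OF x x0] .
  have "\<forall>\<^sub>F s in at_right 0. kap * Q s (x s * s powr nu) / x s ^ (d n - 1) =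
          (x s * s powr nu) * fr s (x s * s powr nu)"
    using ev_pos xpos
  proof eventually_elim
    case (elim s)
    define z where "z = x s * s powr nu"
    define k where "k = d n - 1"
    have dnk: "d n = Suc k" using dn_ge by (simp add: k_def dn_def)
    have rk: "real k = dn - 1" using dn_ge by (simp add: k_def dn_def of_nat_diff)
    have zpos: "z > 0" using elim by (simp add: z_def)
    have zk: "z ^ k = x s ^ k * s powr (nu * (dn - 1))"
      using elim by (simp add: z_def power_mult_distrib powr_power rk mult.commute)
    have "z * fr s z = z * (K s * Q s z) / (z * z ^ k)"
      by (simp add: fr_def P_fac[OF elim(1)] dnk)
    also have "\<dots> = kap * s powr (nu * (dn - 1)) * Q s z / (x s ^ k * s powr (nu * (dn - 1)))"
      using zpos by (simp add: zk K_eq[OF elim(1)])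
    also have "\<dots> = kap * Q s z / x s ^ k" using elim by simp
    finally show ?case by (simp add: z_def k_def)
  qed
  moreover have "((\<lambda>s. kap * Q s (x s * s powr nu) / x s ^ (d n - 1)) \<longlongrightarrow> kap * 1 / x0 ^ (d n - 1)) (at_right 0)"
    by (intro tendsto_intros Q_lim[OF x] x) (use x0 in auto)
  ultimately show ?thesis by (simp add: tendsto_cong)
qed

lemma frac_eq: "(cc::real) \<noteq> 0 \<Longrightarrow> (z / cc) ^ D / ((z / cc) ^ D - 1) = z ^ D / (z ^ D - cc ^ D)"
proof -
  assume c: "cc \<noteq> 0"
  have "(z / cc) ^ D - 1 = (z ^ D - cc ^ D) / cc ^ D" using c by (simp add: power_divide field_simps)
  then show ?thesis using c by (simp add: power_divide)
qed

lemma zL_eq: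
  assumes s: "s > 0" and zpos: "z > 0"
  shows "- dn + (\<Sum>i\<in>I. (-1)^i * DDr i * ((z / c s i) ^ DD d i / ((z / c s i) ^ DD d i - 1))) = z * Ld s z"
proof -
  have "z * Ld s z = - dn + (\<Sum>i\<in>I. (-1)^i * DDr i * (z * z ^ (DD d i - 1)) / (z ^ DD d i - c s i ^ DD d i))"
  proof -
    have "z * Ld s z = z * (- dn / z) + (\<Sum>i\<in>I. z * ((-1)^i * DDr i * z ^ (DD d i - 1) / (z ^ DD d i - c s i ^ DD d i)))"
      by (simp only: Ld_def distrib_left sum_distrib_left)
    also have "z * (- dn / z) = - dn" using zpos by simp
    also have "(\<Sum>i\<in>I. z * ((-1)^i * DDr i * z ^ (DD d i - 1) / (z ^ DD d i - c s i ^ DD d i)))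
        = (\<Sum>i\<in>I. (-1)^i * DDr i * (z * z ^ (DD d i - 1)) / (z ^ DD d i - c s i ^ DD d i))"
      by (rule sum.cong) (simp_all add: mult_ac)
    finally show ?thesis .
  qed
  also have "(\<Sum>i\<in>I. (-1)^i * DDr i * (z * z ^ (DD d i - 1)) / (z ^ DD d i - c s i ^ DD d i))
      = (\<Sum>i\<in>I. (-1)^i * DDr i * ((z / c s i) ^ DD d i / ((z / c s i) ^ DD d i - 1)))"
  proof (rule sum.cong[OF refl])
    fix i assume i: "i \<in> I"
    have e1: "z * z ^ (DD d i - 1) = z ^ DD d i" using DD_pos[OF i]
      by (metis Suc_diff_le diff_Suc_1 power_Suc)
    have cnz: "c s i \<noteq> 0" using c_pos[OF s i] by simp
    show "(-1)^i * DDr i * (z * z ^ (DD d i - 1)) / (z ^ DD d i - c s i ^ DD d i) =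
          (-1)^i * DDr i * ((z / c s i) ^ DD d i / ((z / c s i) ^ DD d i - 1))"
      unfolding e1 frac_eq[OF cnz] by (simp only: times_divide_eq_right)
  qed
  finally show ?thesis by (rule sym)
qed

lemma zL_lim:
  assumes x: "(x \<longlongrightarrow> x0) (at_right 0)" and x0: "x0 > 0"
  shows "((\<lambda>s. (x s * s powr nu) * Ld s (x s * s powr nu)) \<longlongrightarrow> - dn) (at_right 0)"
proof -
  have xpos: "\<forall>\<^sub>F s in at_right 0. x s > 0" using order_tendstoD(1)[OF x x0] .
  have "\<forall>\<^sub>F s in at_right 0. - dn + (\<Sum>i\<in>I. (-1)^i * DDr i * ((x s * s powr nu / c s i) ^ DD d i /
            ((x s * s powr nu / c s i) ^ DD d i - 1))) =
          (x s * s powr nu) * Ld s (x s * s powr nu)"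
    using ev_pos xpos
  proof eventually_elim
    case (elim s)
    have "x s * s powr nu > 0" using elim by simp
    from zL_eq[OF elim(1) this] show ?case .
  qed
  moreover have "((\<lambda>s. - dn + (\<Sum>i\<in>I. (-1)^i * DDr i * ((x s * s powr nu / c s i) ^ DD d i /
            ((x s * s powr nu / c s i) ^ DD d i - 1)))) \<longlongrightarrow>
        - dn + (\<Sum>i\<in>I. (-1)^i * DDr i * (0 ^ DD d i / (0 ^ DD d i - 1)))) (at_right 0)"
    by (intro tendsto_intros q_lim[OF x]) (auto simp: power_0_left DD_ne0)
  moreover have "(\<Sum>i\<in>I. (-1)^i * DDr i * (0 ^ DD d i / (0 ^ DD d i - 1))) = (0::real)"
    by (auto simp: power_0_left DD_ne0 intro!: sum.neutral)
  ultimately show ?thesis by (simp add: tendsto_cong)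
qed


definition "Pc s w = (\<Prod>i\<in>I. if even i then w ^ DD d i - complex_of_real (c s i) ^ DD d i
     else inverse (w ^ DD d i - complex_of_real (c s i) ^ DD d i))"

lemma Rn_eq: "Rn d n s S T = (\<lambda>w. S * (Pc s w / w ^ d n) + T)"
  unfolding Rn_def Pc_def c_def I_def by (rule ext) simp

lemma Pc_deriv:
  assumes nz: "\<forall>i\<in>I. w ^ DD d i \<noteq> complex_of_real (c s i) ^ DD d i"
  shows "(Pc s has_field_derivative Pc s w * (\<Sum>i\<in>I. (-1)^i * of_nat (DD d i) * w ^ (DD d i - 1) /
      (w ^ DD d i - complex_of_real (c s i) ^ DD d i))) (at w)"
proof -
  define C where "C i = complex_of_real (c s i) ^ DD d i" for i
  define f where "f i = (\<lambda>w. if even i then w ^ DD d i - C i else inverse (w ^ DD d i - C i))" for i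
  define f' where "f' i = (if even i then of_nat (DD d i) * w ^ (DD d i - 1)
       else - (of_nat (DD d i) * w ^ (DD d i - 1) * inverse ((w ^ DD d i - C i) ^ 2)))" for i
  have Pc_f: "Pc s = (\<lambda>w. \<Prod>i\<in>I. f i w)" unfolding Pc_def f_def C_def by simp
  have nz': "w ^ DD d i - C i \<noteq> 0" if "i \<in> I" for i using nz that by (simp add: C_def)
  have fnz: "f i w \<noteq> 0" if "i \<in> I" for i using nz'[OF that] by (simp add: f_def)
  have fd: "(f i has_field_derivative f' i) (at w)" if "i \<in> I" for i
  proof (cases "even i")
    case True
    have "((\<lambda>w. w ^ DD d i - C i) has_field_derivative of_nat (DD d i) * w ^ (DD d i - 1)) (at w)"
      by (auto intro!: derivative_eq_intros)
    then show ?thesis using True by (simp add: f_def f'_def)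
  next
    case False
    have "((\<lambda>w. w ^ DD d i - C i) has_field_derivative of_nat (DD d i) * w ^ (DD d i - 1)) (at w)"
      by (auto intro!: derivative_eq_intros)
    from DERIV_inverse_fun[OF this nz'[OF that]]
    show ?thesis using False by (simp add: f_def f'_def power2_eq_square inverse_mult_distrib)
  qed
  have r: "f' i / f i w = (-1)^i * of_nat (DD d i) * w ^ (DD d i - 1) / (w ^ DD d i - C i)" if "i \<in> I" for i
  proof (cases "even i")
    case True then show ?thesis by (simp add: f_def f'_def)
  next
    case False
    define Y where "Y = w ^ DD d i - C i"
    define aa where "aa = of_nat (DD d i) * w ^ (DD d i - 1)"
    have Y: "Y \<noteq> 0" using nz'[OF that] by (simp add: Y_def)
    have "f' i / f i w = - (aa * inverse (Y ^ 2)) / inverse Y" using False by (simp add: f_def f'_def Y_def aa_def)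
    also have "\<dots> = - aa / Y" using Y by (simp add: power2_eq_square field_simps)
    also have "\<dots> = (-1)^i * of_nat (DD d i) * w ^ (DD d i - 1) / (w ^ DD d i - C i)"
      using False by (simp add: Y_def aa_def)
    finally show ?thesis .
  qed
  have "(Pc s has_field_derivative (\<Prod>i\<in>I. f i w) * (\<Sum>i\<in>I. f' i / f i w)) (at w)"
    unfolding Pc_f by (rule has_field_derivative_prod') (use fnz fd in auto)
  moreover have "(\<Prod>i\<in>I. f i w) = Pc s w" by (simp add: Pc_f)
  ultimately show ?thesis using r by (simp add: C_def cong: sum.cong)
qed


lemma Pc_real: "Pc s (complex_of_real z) = complex_of_real (P s z)"
  unfolding Pc_def P_def of_real_prod
  by (rule prod.cong[OF refl]) (simp add: of_real_inverse)

lemma Rn_real: "Rn d n s (complex_of_real A) (complex_of_real B) (complex_of_real z) = complex_of_real (A * fr s z + B)"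
  by (simp add: Rn_eq Pc_real fr_def)

lemma Rn_deriv_real:
  assumes z: "z \<noteq> 0" and nz: "\<forall>i\<in>I. z ^ DD d i \<noteq> c s i ^ DD d i"
  shows "(Rn d n s (complex_of_real A) (complex_of_real B) has_field_derivative
          complex_of_real (A * (fr s z * Ld s z))) (at (complex_of_real z))"
proof -
  define w where "w = complex_of_real z"
  define Sg where "Sg = (\<Sum>i\<in>I. (-1)^i * of_nat (DD d i) * w ^ (DD d i - 1) /
      (w ^ DD d i - complex_of_real (c s i) ^ DD d i))"
  have nzc: "\<forall>i\<in>I. w ^ DD d i \<noteq> complex_of_real (c s i) ^ DD d i"
    using nz unfolding w_def by (metis of_real_eq_iff of_real_power)
  have w0: "w \<noteq> 0" using z by (simp add: w_def)
  have Sg_real: "Sg = complex_of_real (\<Sum>i\<in>I. (-1)^i * DDr i * z ^ (DD d i - 1) / (z ^ DD d i - c s i ^ DD d i))"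
    by (simp add: Sg_def w_def DDr_def)
  have "((\<lambda>w. complex_of_real A * (Pc s w / w ^ d n) + complex_of_real B) has_field_derivative
     complex_of_real A * ((Pc s w * Sg * w ^ d n - Pc s w * (of_nat (d n) * w ^ (d n - 1))) / (w ^ d n * w ^ d n))) (at w)"
    using Pc_deriv[OF nzc] w0 unfolding Sg_def
    by (auto intro!: derivative_eq_intros simp: algebra_simps)
  moreover have "complex_of_real A * ((Pc s w * Sg * w ^ d n - Pc s w * (of_nat (d n) * w ^ (d n - 1))) / (w ^ d n * w ^ d n))
     = complex_of_real A * (Pc s w / w ^ d n * (- of_nat (d n) / w + Sg))"
  proof -
    have "w ^ d n = w * w ^ (d n - 1)" using dn_ge
      by (metis One_nat_def Suc_pred dn_def not_numeral_le_zero of_nat_0 of_nat_le_iff power_Suc zero_less_iff_neq_zero)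
    then show ?thesis using w0 by (simp add: field_simps)
  qed
  moreover have "complex_of_real A * (Pc s w / w ^ d n * (- of_nat (d n) / w + Sg)) = complex_of_real (A * (fr s z * Ld s z))"
    by (simp add: Sg_real w_def Pc_real fr_def Ld_def dn_def)
  ultimately show ?thesis unfolding Rn_eq w_def by simp
qed


definition "U s = {z. 0 < z \<and> (\<forall>i\<in>I. z < c s i)}"

lemma fac_nz: "s > 0 \<Longrightarrow> i \<in> I \<Longrightarrow> 0 \<le> z \<Longrightarrow> z < c s i \<Longrightarrow> z ^ DD d i - c s i ^ DD d i \<noteq> 0"
proof -
  assume "s > 0" "i \<in> I" "0 \<le> z" "z < c s i"
  then have "z ^ DD d i < c s i ^ DD d i" using DD_pos[of i] \<open>i \<in> I\<close>
    by (intro power_strict_mono) auto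
  then show ?thesis by simp
qed

lemma cont_P: "s > 0 \<Longrightarrow> continuous_on (U s) (P s)"
proof -
  assume s: "s > 0"
  show ?thesis unfolding P_def
  proof (intro continuous_on_prod)
    fix i assume i: "i \<in> I"
    show "continuous_on (U s) (\<lambda>z. if even i then z ^ DD d i - c s i ^ DD d i else inverse (z ^ DD d i - c s i ^ DD d i))"
    proof (cases "even i")
      case True then show ?thesis by (simp add: continuous_intros)
    next
      case False
      have "continuous_on (U s) (\<lambda>z. inverse (z ^ DD d i - c s i ^ DD d i))"
        by (intro continuous_intros) (use fac_nz[OF s i] i in \<open>auto simp: U_def\<close>)
      then show ?thesis using False by simp
    qed
  qed
qed

lemma cont_fr: "s > 0 \<Longrightarrow> continuous_on (U s) (fr s)"
proof -
  assume s: "s > 0"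
  have "continuous_on (U s) (\<lambda>z. P s z / z ^ d n)"
    by (intro continuous_intros cont_P[OF s]) (auto simp: U_def)
  then show ?thesis by (simp add: fr_def[abs_def])
qed

lemma cont_Ld: "s > 0 \<Longrightarrow> continuous_on (U s) (Ld s)"
proof -
  assume s: "s > 0"
  have "continuous_on (U s) (\<lambda>z. - dn / z + (\<Sum>i\<in>I. (-1)^i * DDr i * z ^ (DD d i - 1) / (z ^ DD d i - c s i ^ DD d i)))"
    by (intro continuous_intros) (use fac_nz[OF s] in \<open>auto simp: U_def\<close>)
  then show ?thesis by (simp add: Ld_def[abs_def])
qed

definition "gg s z = (1 - z)^2 * (fr s 1 * Ld s 1) * (fr s z * Ld s z) - (fr s z - fr s 1)^2"

lemma cont_gg: "s > 0 \<Longrightarrow> continuous_on (U s) (gg s)"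
proof -
  assume s: "s > 0"
  have "continuous_on (U s) (\<lambda>z. (1 - z)^2 * (fr s 1 * Ld s 1) * (fr s z * Ld s z) - (fr s z - fr s 1)^2)"
    by (intro continuous_intros cont_fr[OF s] cont_Ld[OF s])
  then show ?thesis by (simp add: gg_def[abs_def])
qed

definition "hh x = real (d 1) * dn * x ^ (d n - 1) / kap - 1"

lemma kap_pos: "kap > 0" using m_pos by (simp add: kap_def)

lemma z_lim: "(x \<longlongrightarrow> x0) (at_right 0) \<Longrightarrow> ((\<lambda>s. x s * s powr nu) \<longlongrightarrow> 0) (at_right 0)"
  using tendsto_mult[OF _ spowr0[OF nu_pos], of x x0] by simp

lemma w_nz:
  assumes x: "(x \<longlongrightarrow> x0) (at_right 0)" and x0: "x0 > 0"
  shows "\<forall>\<^sub>F s in at_right 0. fr s (x s * s powr nu) \<noteq> 0"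
proof -
  have "\<forall>\<^sub>F s in at_right 0. (x s * s powr nu) * fr s (x s * s powr nu) \<noteq> 0"
    by (rule tendsto_imp_eventually_ne[OF zf_lim[OF x x0]]) (use kap_pos x0 in simp)
  then show ?thesis by eventually_elim auto
qed

lemma G_lim:
  assumes x: "(x \<longlongrightarrow> x0) (at_right 0)" and x0: "x0 > 0"
  shows "((\<lambda>s. gg s (x s * s powr nu) / (fr s (x s * s powr nu))^2) \<longlongrightarrow> hh x0) (at_right 0)"
proof -
  define k where "k = d n - 1"
  have xpos: "\<forall>\<^sub>F s in at_right 0. x s > 0" using order_tendstoD(1)[OF x x0] .
  have "\<forall>\<^sub>F s in at_right 0.
      (1 - x s * s powr nu)^2 * (fr s 1 * Ld s 1) * ((x s * s powr nu) * Ld s (x s * s powr nu)) /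
        ((x s * s powr nu) * fr s (x s * s powr nu))
      - (1 - fr s 1 * (x s * s powr nu) / ((x s * s powr nu) * fr s (x s * s powr nu)))^2
      = gg s (x s * s powr nu) / (fr s (x s * s powr nu))^2"
    using ev_pos xpos w_nz[OF x x0]
  proof eventually_elim
    case (elim s)
    define z where "z = x s * s powr nu"
    have z: "z \<noteq> 0" using elim by (simp add: z_def)
    have F: "fr s z \<noteq> 0" using elim by (simp add: z_def)
    show ?case unfolding z_def[symmetric] gg_def using z F
      by (simp add: field_simps power2_eq_square)
  qed
  moreover have "((\<lambda>s. (1 - x s * s powr nu)^2 * (fr s 1 * Ld s 1) * ((x s * s powr nu) * Ld s (x s * s powr nu)) /
        ((x s * s powr nu) * fr s (x s * s powr nu))
      - (1 - fr s 1 * (x s * s powr nu) / ((x s * s powr nu) * fr s (x s * s powr nu)))^2)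
      \<longlongrightarrow> (1 - 0)^2 * (1 * (- real (d 1))) * (- dn) / (kap / x0 ^ (d n - 1))
         - (1 - 1 * 0 / (kap / x0 ^ (d n - 1)))^2) (at_right 0)"
    by (intro tendsto_intros z_lim[OF x] f1_lim L1_lim zL_lim[OF x x0] zf_lim[OF x x0])
       (use kap_pos x0 in auto)
  moreover have "(1 - 0)^2 * (1 * (- real (d 1))) * (- dn) / (kap / x0 ^ (d n - 1))
         - (1 - 1 * 0 / (kap / x0 ^ (d n - 1)))^2 = hh x0"
    by (simp add: hh_def)
  ultimately show ?thesis by (simp add: tendsto_cong)
qed

lemma gg_pos: "x > 0 \<Longrightarrow> hh x > 0 \<Longrightarrow> \<forall>\<^sub>F s in at_right 0. gg s (x * s powr nu) > 0"
proof -
  assume x: "x > 0" "hh x > 0"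
  have "\<forall>\<^sub>F s in at_right 0. gg s (x * s powr nu) / (fr s (x * s powr nu))^2 > 0"
    using order_tendstoD(1)[OF G_lim[OF tendsto_const x(1)] x(2)] .
  moreover have "\<forall>\<^sub>F s in at_right 0. fr s (x * s powr nu) \<noteq> 0" using w_nz[OF tendsto_const x(1)] .
  ultimately show ?thesis
    by eventually_elim (simp add: zero_less_divide_iff)
qed

lemma gg_neg: "x > 0 \<Longrightarrow> hh x < 0 \<Longrightarrow> \<forall>\<^sub>F s in at_right 0. gg s (x * s powr nu) < 0"
proof -
  assume x: "x > 0" "hh x < 0"
  have "\<forall>\<^sub>F s in at_right 0. gg s (x * s powr nu) / (fr s (x * s powr nu))^2 < 0"
    using order_tendstoD(2)[OF G_lim[OF tendsto_const x(1)] x(2)] .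
  moreover have "\<forall>\<^sub>F s in at_right 0. fr s (x * s powr nu) \<noteq> 0" using w_nz[OF tendsto_const x(1)] .
  ultimately show ?thesis
    by eventually_elim (simp add: divide_less_0_iff)
qed


definition "a = (kap / (real (d 1) * dn)) powr (1 / (dn - 1))"

lemma d1_pos: "real (d 1) > 0" using dpos' n3 by auto

lemma a_pos: "a > 0" using kap_pos d1_pos dn_ge by (simp add: a_def)

lemma a_pow: "a ^ (d n - 1) = kap / (real (d 1) * dn)"
proof -
  have rk: "real (d n - 1) = dn - 1" using dn_ge by (simp add: dn_def of_nat_diff)
  have "a ^ (d n - 1) = a powr real (d n - 1)" using a_pos by (simp add: powr_realpow)
  also have "\<dots> = (kap / (real (d 1) * dn)) powr (1 / (dn - 1) * real (d n - 1))"
    unfolding a_def by (rule powr_powr)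
  also have "1 / (dn - 1) * real (d n - 1) = 1" using rk dn_ge by simp
  also have "(kap / (real (d 1) * dn)) powr 1 = kap / (real (d 1) * dn)"
    using kap_pos d1_pos dn_ge by simp
  finally show ?thesis .
qed

lemma a_pow': "a ^ (d n - Suc 0) = kap / (real (d 1) * dn)" using a_pow by simp

lemma hh_a: "hh a = 0" using a_pow d1_pos dn_ge kap_pos by (simp add: hh_def)

lemma dn1: "d n - 1 \<noteq> 0" using dn_ge by (simp add: dn_def)

lemma hh_gt: "x > a \<Longrightarrow> hh x > 0"
proof -
  assume x: "x > a"
  have "a ^ (d n - 1) < x ^ (d n - 1)" using x a_pos dn1 by (intro power_strict_mono) auto
  then have "real (d 1) * dn * a ^ (d n - 1) / kap < real (d 1) * dn * x ^ (d n - 1) / kap"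
    using d1_pos dn_ge kap_pos by (intro divide_strict_right_mono mult_strict_left_mono) auto
  then show ?thesis using hh_a unfolding hh_def by linarith
qed

lemma hh_lt: "0 < x \<Longrightarrow> x < a \<Longrightarrow> hh x < 0"
proof -
  assume x: "0 < x" "x < a"
  have "x ^ (d n - 1) < a ^ (d n - 1)" using x dn1 by (intro power_strict_mono) auto
  then have "real (d 1) * dn * x ^ (d n - 1) / kap < real (d 1) * dn * a ^ (d n - 1) / kap"
    using d1_pos dn_ge kap_pos by (intro divide_strict_right_mono mult_strict_left_mono) auto
  then show ?thesis using hh_a unfolding hh_def by linarith
qed

lemma ev_U: "\<forall>\<^sub>F s in at_right 0. s > 0 \<and> (\<forall>x\<in>{a/2..2*a}. x * s powr nu \<in> U s)"
proof -
  have "\<forall>i\<in>I. \<forall>\<^sub>F s in at_right 0. 2 * a * s powr nu / c s i < 1"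
  proof
    fix i assume i: "i \<in> I"
    show "\<forall>\<^sub>F s in at_right 0. 2 * a * s powr nu / c s i < 1"
      using order_tendstoD(2)[OF q_lim[OF tendsto_const i], of 1] by simp
  qed
  then have "\<forall>\<^sub>F s in at_right 0. \<forall>i\<in>I. 2 * a * s powr nu / c s i < 1"
    using finI by (simp add: eventually_ball_finite)
  with ev_pos show ?thesis
  proof eventually_elim
    case (elim s)
    show ?case
    proof (intro conjI ballI)
      fix x assume x: "x \<in> {a/2..2*a}"
      have xp: "x > 0" using x a_pos by auto
      have "x * s powr nu < c s i" if i: "i \<in> I" for i
      proof -
        have "x * s powr nu \<le> 2 * a * s powr nu" using x elim by (intro mult_right_mono) auto
        also have "\<dots> < c s i" using elim(2) i c_pos[OF elim(1) i] by (auto simp: divide_less_eq)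
        finally show ?thesis .
      qed
      then show "x * s powr nu \<in> U s" using xp elim by (simp add: U_def)
    qed (use elim in auto)
  qed
qed

lemma cont_phi: "s > 0 \<Longrightarrow> (\<forall>x\<in>{a/2..2*a}. x * s powr nu \<in> U s) \<Longrightarrow>
    continuous_on {a/2..2*a} (\<lambda>x. gg s (x * s powr nu))"
  by (rule continuous_on_compose2[OF cont_gg]) (auto intro!: continuous_intros)

definition "Z s = {x \<in> {a/2..2*a}. gg s (x * s powr nu) = 0}"
definition "xs s = (if Z s \<noteq> {} \<and> closed (Z s) then (SOME x. x \<in> Z s \<and> (\<forall>y\<in>Z s. dist a x \<le> dist a y)) else a)"

lemma xs_good:
  assumes e: "0 < e" "e \<le> a / 2"
  shows "\<forall>\<^sub>F s in at_right 0. xs s \<in> Z s \<and> \<bar>xs s - a\<bar> \<le> e"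
proof -
  have "\<forall>\<^sub>F s in at_right 0. gg s ((a - e) * s powr nu) < 0"
    by (rule gg_neg) (use e hh_lt[of "a - e"] in auto)
  moreover have "\<forall>\<^sub>F s in at_right 0. gg s ((a + e) * s powr nu) > 0"
    by (rule gg_pos) (use e a_pos hh_gt[of "a + e"] in auto)
  ultimately show ?thesis using ev_U
  proof eventually_elim
    case (elim s)
    have cont: "continuous_on {a/2..2*a} (\<lambda>x. gg s (x * s powr nu))" using cont_phi elim(3) by blast
    have sub: "{a - e..a + e} \<subseteq> {a/2..2*a}" using e by auto
    obtain y where y: "y \<ge> a - e" "y \<le> a + e" "gg s (y * s powr nu) = 0"
      using IVT'[of "\<lambda>x. gg s (x * s powr nu)" "a - e" 0 "a + e"] elim(1,2) e
        continuous_on_subset[OF cont sub] by force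
    have yZ: "y \<in> Z s" using y sub by (auto simp: Z_def)
    have cl: "closed (Z s)" unfolding Z_def by (rule continuous_closed_preimage_constant[OF cont]) simp
    have ne: "Z s \<noteq> {}" using yZ by auto
    obtain x0 where x0: "x0 \<in> Z s" "\<And>y. y \<in> Z s \<Longrightarrow> dist a x0 \<le> dist a y"
      using distance_attains_inf[OF cl ne, of a] by blast
    have "\<exists>x. x \<in> Z s \<and> (\<forall>y\<in>Z s. dist a x \<le> dist a y)" using x0 by blast
    have xse: "xs s = (SOME x. x \<in> Z s \<and> (\<forall>y\<in>Z s. dist a x \<le> dist a y))"
      using cl ne by (simp add: xs_def)
    have xs: "xs s \<in> Z s \<and> (\<forall>y\<in>Z s. dist a (xs s) \<le> dist a y)"
      unfolding xse by (rule someI_ex[OF \<open>\<exists>x. x \<in> Z s \<and> (\<forall>y\<in>Z s. dist a x \<le> dist a y)\<close>])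
    then have "dist a (xs s) \<le> dist a y" using yZ by blast
    then have "\<bar>xs s - a\<bar> \<le> e" using y by (simp add: dist_real_def)
    then show ?case using xs by blast
  qed
qed

lemma xs_lim: "(xs \<longlongrightarrow> a) (at_right 0)"
proof (rule tendstoI)
  fix e :: real assume e: "e > 0"
  have "\<forall>\<^sub>F s in at_right 0. xs s \<in> Z s \<and> \<bar>xs s - a\<bar> \<le> min (e/2) (a/2)"
    by (rule xs_good) (use e a_pos in auto)
  then show "\<forall>\<^sub>F s in at_right 0. dist (xs s) a < e"
    by eventually_elim (use e in \<open>auto simp: dist_real_def\<close>)
qed


lemma mu_eq: "mu_const d n = a / (real (d 1) * dn)"
proof -
  define p where "p = real (d 1) * dn"
  have p: "p > 0" using d1_pos dn_ge by (simp add: p_def)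
  have dn1: "dn - 1 > 0" using dn_ge by simp
  have "a / p = kap powr (1 / (dn - 1)) * p powr (- dn / (dn - 1))"
  proof -
    have "a / p = kap powr (1 / (dn - 1)) / (p powr (1 / (dn - 1)) * p powr 1)"
      using p kap_pos by (simp add: a_def p_def powr_divide)
    also have "p powr (1 / (dn - 1)) * p powr 1 = p powr (dn / (dn - 1))"
    proof -
      have "p powr (1 / (dn - 1)) * p powr 1 = p powr (1 / (dn - 1) + 1)" by (rule powr_add[symmetric])
      also have "1 / (dn - 1) + 1 = dn / (dn - 1)" using dn1 by (simp add: field_simps)
      finally show ?thesis .
    qed
    finally show ?thesis using p by (simp add: powr_minus divide_inverse)
  qed
  also have "kap powr (1 / (dn - 1)) = M powr (2 * (dn - real (d 1)) / (real (d 1) * (dn - 1)))"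
    using M_pos by (simp add: kap_def m_def powr_powr)
  finally show ?thesis by (simp add: mu_const_def p_def dn_def M_def mult.commute)
qed

definition "zr s = xs s * s powr nu"
definition "Sr s = (1 - zr s) / (fr s (zr s) - fr s 1)"
definition "Tr s = zr s - Sr s * fr s 1"
definition "Dq s = zr s * fr s (zr s) / xs s - s powr nu * fr s 1"

lemma xs_pos: "\<forall>\<^sub>F s in at_right 0. xs s > 0"
  using order_tendstoD(1)[OF xs_lim a_pos] .

lemma Dq_lim: "(Dq \<longlongrightarrow> kap / a ^ (d n - 1) / a) (at_right 0)"
proof -
  have "(Dq \<longlongrightarrow> kap / a ^ (d n - 1) / a - 0 * 1) (at_right 0)"
    unfolding Dq_def zr_def
    by (intro tendsto_intros zf_lim[OF xs_lim a_pos] xs_lim spowr0 nu_pos f1_lim) (use a_pos in simp)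
  then show ?thesis by simp
qed

lemma Dq_nz: "\<forall>\<^sub>F s in at_right 0. Dq s \<noteq> 0"
  by (rule tendsto_imp_eventually_ne[OF Dq_lim]) (use kap_pos a_pos in simp)

lemma Dq_eq: "\<forall>\<^sub>F s in at_right 0. Dq s = s powr nu * (fr s (zr s) - fr s 1)"
  using xs_pos by eventually_elim (simp add: Dq_def zr_def field_simps)

lemma S_lim: "((\<lambda>s. Sr s / s powr nu) \<longlongrightarrow> mu_const d n) (at_right 0)"
proof -
  have "\<forall>\<^sub>F s in at_right 0. (1 - zr s) / Dq s = Sr s / s powr nu"
    using Dq_eq ev_pos by eventually_elim (simp add: Sr_def)
  moreover have "((\<lambda>s. (1 - zr s) / Dq s) \<longlongrightarrow> (1 - 0) / (kap / a ^ (d n - 1) / a)) (at_right 0)"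
    unfolding zr_def by (intro tendsto_intros Dq_lim z_lim[OF xs_lim]) (use kap_pos a_pos in simp)
  moreover have "(1 - 0) / (kap / a ^ (d n - 1) / a) = mu_const d n"
    using kap_pos a_pos d1_pos dn_ge by (simp add: mu_eq a_pow a_pow')
  ultimately show ?thesis by (simp add: tendsto_cong)
qed

lemma Z_lim: "((\<lambda>s. zr s / s powr nu) \<longlongrightarrow> real (d 1) * real (d n) * mu_const d n) (at_right 0)"
proof -
  have "\<forall>\<^sub>F s in at_right 0. xs s = zr s / s powr nu"
    using ev_pos by eventually_elim (simp add: zr_def)
  moreover have "real (d 1) * real (d n) * mu_const d n = a" using d1_pos dn_ge by (simp add: mu_eq dn_def)
  ultimately show ?thesis using xs_lim by (simp add: tendsto_cong)
qed

lemma T_lim: "((\<lambda>s. Tr s / s powr nu) \<longlongrightarrow> (real (d 1) * real (d n) - 1) * mu_const d n) (at_right 0)"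
proof -
  have "\<forall>\<^sub>F s in at_right 0. zr s / s powr nu - Sr s / s powr nu * fr s 1 = Tr s / s powr nu"
    using ev_pos by eventually_elim (simp add: Tr_def diff_divide_distrib)
  moreover have "((\<lambda>s. zr s / s powr nu - Sr s / s powr nu * fr s 1) \<longlongrightarrow>
      real (d 1) * real (d n) * mu_const d n - mu_const d n * 1) (at_right 0)"
    by (intro tendsto_intros Z_lim S_lim f1_lim)
  ultimately show ?thesis by (simp add: tendsto_cong algebra_simps)
qed

lemma eqs: "\<forall>\<^sub>F s in at_right 0.
        Rn d n s (complex_of_real (Sr s)) (complex_of_real (Tr s)) 1 = complex_of_real (zr s) \<and>
        Rn d n s (complex_of_real (Sr s)) (complex_of_real (Tr s)) (complex_of_real (zr s)) = 1 \<and>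
        (\<exists>aa b. (Rn d n s (complex_of_real (Sr s)) (complex_of_real (Tr s)) has_field_derivative aa) (at 1) \<and>
               (Rn d n s (complex_of_real (Sr s)) (complex_of_real (Tr s)) has_field_derivative b) (at (complex_of_real (zr s))) \<and>
               aa * b = 1)"
proof -
  have "\<forall>i\<in>I. \<forall>\<^sub>F s in at_right 0. c s i < 1"
  proof
    fix i assume i: "i \<in> I"
    show "\<forall>\<^sub>F s in at_right 0. c s i < 1" using order_tendstoD(2)[OF c_lim[OF i], of 1] by simp
  qed
  then have c1: "\<forall>\<^sub>F s in at_right 0. \<forall>i\<in>I. c s i < 1"
    using finI by (simp add: eventually_ball_finite)
  have xg: "\<forall>\<^sub>F s in at_right 0. xs s \<in> Z s \<and> \<bar>xs s - a\<bar> \<le> a / 2"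
    by (rule xs_good) (use a_pos in auto)
  show ?thesis using ev_U c1 xg Dq_eq Dq_nz
  proof eventually_elim
    case (elim s)
    have s: "s > 0" using elim by auto
    have xZ: "xs s \<in> Z s" using elim by auto
    then have zU: "zr s \<in> U s" using elim(1) by (auto simp: Z_def zr_def)
    have g0: "gg s (zr s) = 0" using xZ by (simp add: Z_def zr_def)
    have nzd: "fr s (zr s) - fr s 1 \<noteq> 0" using elim(4,5) by auto
    have R1: "Rn d n s (complex_of_real (Sr s)) (complex_of_real (Tr s)) 1 = complex_of_real (zr s)"
      using Rn_real[of s "Sr s" "Tr s" 1] by (simp add: Tr_def)
    have R2: "Rn d n s (complex_of_real (Sr s)) (complex_of_real (Tr s)) (complex_of_real (zr s)) = 1"
    proof -
      have "Sr s * fr s (zr s) + Tr s = 1"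
      proof -
        have "Sr s * fr s (zr s) + Tr s = Sr s * (fr s (zr s) - fr s 1) + zr s" by (simp add: Tr_def algebra_simps)
        also have "Sr s * (fr s (zr s) - fr s 1) = 1 - zr s" using nzd by (simp add: Sr_def)
        finally show ?thesis by simp
      qed
      then show ?thesis using Rn_real[of s "Sr s" "Tr s" "zr s"] by simp
    qed
    have nz1: "\<forall>i\<in>I. (1::real) ^ DD d i \<noteq> c s i ^ DD d i"
    proof
      fix i assume i: "i \<in> I"
      have "c s i ^ DD d i < 1" using elim(2) i c_pos[OF s i] DD_pos[of i]
        by (intro power_less_one_iff[THEN iffD2]) auto
      then show "(1::real) ^ DD d i \<noteq> c s i ^ DD d i" by simp
    qed
    have nzz: "\<forall>i\<in>I. zr s ^ DD d i \<noteq> c s i ^ DD d i"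
      using fac_nz[OF s] zU by (auto simp: U_def)
    have zr0: "zr s \<noteq> 0" using zU by (simp add: U_def)
    have D1: "(Rn d n s (complex_of_real (Sr s)) (complex_of_real (Tr s)) has_field_derivative
        complex_of_real (Sr s * (fr s 1 * Ld s 1))) (at 1)"
      using Rn_deriv_real[of 1 s "Sr s" "Tr s"] nz1 by simp
    have D2: "(Rn d n s (complex_of_real (Sr s)) (complex_of_real (Tr s)) has_field_derivative
        complex_of_real (Sr s * (fr s (zr s) * Ld s (zr s)))) (at (complex_of_real (zr s)))"
      using Rn_deriv_real[of "zr s" s "Sr s" "Tr s"] nzz zr0 by simp
    have prod1: "Sr s * (fr s 1 * Ld s 1) * (Sr s * (fr s (zr s) * Ld s (zr s))) = 1"
    proof -
      have "(1 - zr s)^2 * (fr s 1 * Ld s 1) * (fr s (zr s) * Ld s (zr s)) = (fr s (zr s) - fr s 1)^2"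
        using g0 by (simp add: gg_def)
      then show ?thesis unfolding Sr_def by (rule aux_prod[OF nzd])
    qed
    have "complex_of_real (Sr s * (fr s 1 * Ld s 1)) * complex_of_real (Sr s * (fr s (zr s) * Ld s (zr s))) = 1"
      using prod1 by (simp flip: of_real_mult)
    then show ?case using R1 R2 D1 D2 by blast
  qed
qed

lemma main:
  "\<exists>S T z0 :: real \<Rightarrow> complex.
     (\<forall>\<^sub>F s in at_right 0.
        Rn d n s (S s) (T s) 1 = z0 s \<and>
        Rn d n s (S s) (T s) (z0 s) = 1 \<and>
        (\<exists>a b. (Rn d n s (S s) (T s) has_field_derivative a) (at 1) \<and>
               (Rn d n s (S s) (T s) has_field_derivative b) (at (z0 s)) \<and>
               a * b = 1)) \<and>
     ((\<lambda>s. S s / complex_of_real (s powr nu_exp d n)) \<longlongrightarrow> complex_of_real (mu_const d n)) (at_right 0) \<and>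
     ((\<lambda>s. T s / complex_of_real (s powr nu_exp d n))
        \<longlongrightarrow> complex_of_real ((real (d 1) * real (d n) - 1) * mu_const d n)) (at_right 0) \<and>
     ((\<lambda>s. z0 s / complex_of_real (s powr nu_exp d n))
        \<longlongrightarrow> complex_of_real (real (d 1) * real (d n) * mu_const d n)) (at_right 0)"
proof (intro exI conjI)
  show "\<forall>\<^sub>F s in at_right 0.
        Rn d n s (complex_of_real (Sr s)) (complex_of_real (Tr s)) 1 = complex_of_real (zr s) \<and>
        Rn d n s (complex_of_real (Sr s)) (complex_of_real (Tr s)) (complex_of_real (zr s)) = 1 \<and>
        (\<exists>a b. (Rn d n s (complex_of_real (Sr s)) (complex_of_real (Tr s)) has_field_derivative a) (at 1) \<and>
               (Rn d n s (complex_of_real (Sr s)) (complex_of_real (Tr s)) has_field_derivative b) (at (complex_of_real (zr s))) \<and>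
               a * b = 1)" by (rule eqs)
  show "((\<lambda>s. complex_of_real (Sr s) / complex_of_real (s powr nu_exp d n)) \<longlongrightarrow> complex_of_real (mu_const d n)) (at_right 0)"
    using tendsto_of_real[OF S_lim, where 'a=complex] by (simp add: nu_def)
  show "((\<lambda>s. complex_of_real (Tr s) / complex_of_real (s powr nu_exp d n))
        \<longlongrightarrow> complex_of_real ((real (d 1) * real (d n) - 1) * mu_const d n)) (at_right 0)"
    using tendsto_of_real[OF T_lim, where 'a=complex] by (simp add: nu_def)
  show "((\<lambda>s. complex_of_real (zr s) / complex_of_real (s powr nu_exp d n))
        \<longlongrightarrow> complex_of_real (real (d 1) * real (d n) * mu_const d n)) (at_right 0)"
    using tendsto_of_real[OF Z_lim, where 'a=complex] by (simp add: nu_def)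
qed

end

theorem lemma4p1:
  fixes n :: nat and d :: "nat \<Rightarrow> nat"
  assumes "n \<ge> 3" and "odd n"
    and "\<forall>i\<in>{1..n}. d i > 0"
    and "(\<Sum>i=1..n. 1 / real (d i)) < 1"
  shows "\<exists>S T z0 :: real \<Rightarrow> complex.
     (\<forall>\<^sub>F s in at_right 0.
        Rn d n s (S s) (T s) 1 = z0 s \<and>
        Rn d n s (S s) (T s) (z0 s) = 1 \<and>
        (\<exists>a b. (Rn d n s (S s) (T s) has_field_derivative a) (at 1) \<and>
               (Rn d n s (S s) (T s) has_field_derivative b) (at (z0 s)) \<and>
               a * b = 1)) \<and>
     ((\<lambda>s. S s / complex_of_real (s powr nu_exp d n)) \<longlongrightarrow> complex_of_real (mu_const d n)) (at_right 0) \<and>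
     ((\<lambda>s. T s / complex_of_real (s powr nu_exp d n))
        \<longlongrightarrow> complex_of_real ((real (d 1) * real (d n) - 1) * mu_const d n)) (at_right 0) \<and>
     ((\<lambda>s. z0 s / complex_of_real (s powr nu_exp d n))
        \<longlongrightarrow> complex_of_real (real (d 1) * real (d n) * mu_const d n)) (at_right 0)"
proof -
  interpret L d n by (rule L.intro) (use assms in auto)
  show ?thesis by (rule main)
qed

end
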